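(* Assume Hypotheses (H1) and (H2) hold for the Markov process $X$ on $\mathbb{R}^d$, and let $R>0$ (in the paper, $R=R_*$ from Lemma 3.2). Then there exists $T_0=T_0(R)>1$ such that for all $x,y\in\overline{B}_R$ and all $t>T_0$, $$\|P_t(x,\cdot)-P_t(y,\cdot)\|_{var}=\sup_{0\le f\le1}[P_tf(x)-P_tf(y)]<1.$$ Moreover, for each such $t>T_0$, $$p:=\sup_{|x|\le R,\,|y|\le R}\|P_t(x,\cdot)-P_t(y,\cdot)\|_{var}<1.$$
   Context: $X$ is an adapted càdlàg strong Markov process on $\mathbb{R}^d$ with semigroup $(P_t)$, transition kernel $P_t(x,\cdot)$ and dual action $P_t^*$ on probability measures. $\Gamma(\mu,\nu)$ is the set of probability measures on $\mathbb{R}^d\times\mathbb{R}^d$ with marginals $\mu,\nu$. $\|\mu\|_{var}=\sup_{\Gamma\in\mathcal{B}(\mathbb{R}^d)}|\mu(\Gamma)|$. $\overline{B}_R=\{|u|\le R\}$. The suprema over $f$ range over Borel functions. (H1): for any $R,\delta>0$ there exist $R_0=R_0(R)>0$ (independent of $\delta$) and $T_0=T_0(R,\delta)$ such that for all $t\ge T_0$ and $x,y\in\overline{B}_R$, $\sup_{\pi\in\Gamma(P_t^*\delta_x,P_t^*\delta_y)}\pi\{(x',y'):|x'-y'|\le\delta,\ x',y'\in\overline{B}_{R_0}\}>0$. (H2): for all $t>0$ and $x$, $\lim_{y\to x}\sup_{\|f\|_\infty\le1}[P_tf(x)-P_tf(y)]=0$. *)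

theory Defs
  imports "HOL-Probability.Probability"
begin

text \<open>A time-homogeneous Markov transition function on the state space 'a
  (R^d is taken as real^'n): P t x is the law of X_t under X_0 = x.\<close>
definition markov_transition :: "(real \<Rightarrow> 'a::euclidean_space \<Rightarrow> 'a measure) \<Rightarrow> bool" where
  "markov_transition P \<longleftrightarrow>
     (\<forall>t\<ge>0. \<forall>x. prob_space (P t x) \<and> sets (P t x) = sets borel) \<and>
     (\<forall>t\<ge>0. P t \<in> borel \<rightarrow>\<^sub>M subprob_algebra borel) \<and>
     (\<forall>x. P 0 x = return borel x) \<and>
     (\<forall>s\<ge>0. \<forall>t\<ge>0. \<forall>x. P (s + t) x = P s x \<bind> P t)"

definition Pf :: "(real \<Rightarrow> 'a \<Rightarrow> 'a measure) \<Rightarrow> real \<Rightarrow> ('a \<Rightarrow> real) \<Rightarrow> 'a \<Rightarrow> real" where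
  "Pf P t f x = integral\<^sup>L (P t x) f"

definition couplings :: "'a::euclidean_space measure \<Rightarrow> 'a measure \<Rightarrow> ('a \<times> 'a) measure set" where
  "couplings \<mu> \<nu> = {\<pi>. prob_space \<pi> \<and> sets \<pi> = sets (borel \<Otimes>\<^sub>M borel) \<and>
                        distr \<pi> borel fst = \<mu> \<and> distr \<pi> borel snd = \<nu>}"

definition var_norm :: "'a::euclidean_space measure \<Rightarrow> 'a measure \<Rightarrow> real" where
  "var_norm \<mu> \<nu> = (SUP A \<in> sets (borel :: 'a measure). \<bar>measure \<mu> A - measure \<nu> A\<bar>)"

definition H1 :: "(real \<Rightarrow> 'a::euclidean_space \<Rightarrow> 'a measure) \<Rightarrow> bool" where
  "H1 P \<longleftrightarrow> (\<forall>R>0. \<exists>R0>0. \<forall>\<delta>>0. \<exists>T0. \<forall>t\<ge>T0. \<forall>x y. norm x \<le> R \<longrightarrow> norm y \<le> R \<longrightarrow>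
     (SUP \<pi> \<in> couplings (P t x) (P t y).
        measure \<pi> {(x', y'). dist x' y' \<le> \<delta> \<and> norm x' \<le> R0 \<and> norm y' \<le> R0}) > 0)"

definition H2 :: "(real \<Rightarrow> 'a::euclidean_space \<Rightarrow> 'a measure) \<Rightarrow> bool" where
  "H2 P \<longleftrightarrow> (\<forall>t>0. \<forall>x.
     ((\<lambda>y. SUP f \<in> {f. f \<in> borel_measurable borel \<and> (\<forall>z. \<bar>f z\<bar> \<le> 1)}.
            Pf P t f x - Pf P t f y) \<longlongrightarrow> 0) (at x))"

end

theory Submission
  imports Defs
begin

lemma vn_bdd:
  assumes "prob_space \<mu>" "prob_space \<nu>"
  shows "bdd_above ((\<lambda>A. \<bar>measure \<mu> A - measure \<nu> A\<bar>) ` X)"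
proof -
  have "\<bar>measure \<mu> A - measure \<nu> A\<bar> \<le> 1" for A
    using prob_space.prob_le_1[OF assms(1), of A] prob_space.prob_le_1[OF assms(2), of A]
      measure_nonneg[of \<mu> A] measure_nonneg[of \<nu> A] by linarith
  then show ?thesis by (auto intro!: bdd_aboveI)
qed

lemma vn_upper:
  assumes "prob_space \<mu>" "prob_space \<nu>" "A \<in> sets borel"
  shows "\<bar>measure \<mu> A - measure \<nu> A\<bar> \<le> var_norm \<mu> \<nu>"
  unfolding var_norm_def by (rule cSUP_upper[OF assms(3) vn_bdd[OF assms(1,2)]])

lemma vn_nonneg:
  assumes "prob_space \<mu>" "prob_space \<nu>"
  shows "0 \<le> var_norm \<mu> \<nu>"
  using vn_upper[OF assms, of "{}"] by (meson abs_ge_zero order_trans sets.empty_sets)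

lemma vn_le1:
  assumes "prob_space \<mu>" "prob_space \<nu>"
  shows "var_norm \<mu> \<nu> \<le> 1"
  unfolding var_norm_def
proof (rule cSUP_least)
  show "sets borel \<noteq> {}" by auto
  fix A show "\<bar>measure \<mu> A - measure \<nu> A\<bar> \<le> 1"
    using prob_space.prob_le_1[OF assms(1), of A] prob_space.prob_le_1[OF assms(2), of A]
      measure_nonneg[of \<mu> A] measure_nonneg[of \<nu> A] by linarith
qed

lemma vn_same: "var_norm \<mu> \<mu> = 0"
  unfolding var_norm_def by simp (metis cSUP_const empty_iff sets.empty_sets)

lemma vn_sym: "var_norm \<mu> \<nu> = var_norm \<nu> \<mu>"
  unfolding var_norm_def by (simp add: abs_minus_commute)

lemma vn_tri:
  assumes "prob_space \<mu>" "prob_space \<nu>" "prob_space \<rho>"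
  shows "var_norm \<mu> \<rho> \<le> var_norm \<mu> \<nu> + var_norm \<nu> \<rho>"
  unfolding var_norm_def[of \<mu> \<rho>]
proof (rule cSUP_least)
  show "sets borel \<noteq> {}" by auto
  fix A :: "'a set" assume A: "A \<in> sets borel"
  have "\<bar>measure \<mu> A - measure \<rho> A\<bar> \<le> \<bar>measure \<mu> A - measure \<nu> A\<bar> + \<bar>measure \<nu> A - measure \<rho> A\<bar>"
    by linarith
  also have "\<dots> \<le> var_norm \<mu> \<nu> + var_norm \<nu> \<rho>"
    using vn_upper[OF assms(1,2) A] vn_upper[OF assms(2,3) A] by linarith
  finally show "\<bar>measure \<mu> A - measure \<rho> A\<bar> \<le> var_norm \<mu> \<nu> + var_norm \<nu> \<rho>" .
qed


lemma floor_count: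
  fixes a :: real and n :: nat
  assumes "0 \<le> a" "a \<le> real n"
  shows "(\<Sum>k\<in>{1..n}. if real k \<le> a then 1 else (0::real)) = real (nat \<lfloor>a\<rfloor>)"
proof -
  have eq: "{k\<in>{1..n}. real k \<le> a} = {1..nat \<lfloor>a\<rfloor>}"
  proof safe
    fix k assume "k \<in> {1..n}" "real k \<le> a"
    then show "k \<in> {1..nat \<lfloor>a\<rfloor>}" by (auto simp: le_nat_iff le_floor_iff)
  next
    fix k assume "k \<in> {1..nat \<lfloor>a\<rfloor>}"
    then have "k \<ge> 1" "int k \<le> \<lfloor>a\<rfloor>" by auto
    then have "real k \<le> a" by (simp add: le_floor_iff)
    then show "real k \<le> a" "k \<in> {1..n}" using assms \<open>k \<ge> 1\<close> by auto
  qed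
  have "(\<Sum>k\<in>{1..n}. if real k \<le> a then 1 else (0::real)) = (\<Sum>k\<in>{k\<in>{1..n}. real k \<le> a}. 1)"
    using sum.inter_filter[of "{1..n}" "\<lambda>_. 1::real" "\<lambda>k. real k \<le> a"] by (simp only: finite_atLeastAtMost)
  also have "\<dots> = real (nat \<lfloor>a\<rfloor>)" unfolding eq by simp
  finally show ?thesis .
qed

lemma int_bnd:
  assumes "prob_space M" "sets M = sets borel" "f \<in> borel_measurable borel" "\<And>z. \<bar>f z\<bar> \<le> (B::real)"
  shows "integrable M f"
proof -
  interpret prob_space M by fact
  have "f \<in> borel_measurable M" using assms(2,3) measurable_cong_sets[OF assms(2) refl] by simp
  then show ?thesis by (intro integrable_const_bound[where B=B]) (auto simp: assms(4))
qed

lemma vn_le: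
  fixes \<mu> \<nu> :: "'a::euclidean_space measure"
  assumes p\<mu>: "prob_space \<mu>" and p\<nu>: "prob_space \<nu>" and s\<mu>: "sets \<mu> = sets borel" and s\<nu>: "sets \<nu> = sets borel"
    and fm[measurable]: "f \<in> borel_measurable borel" and f01: "\<And>z. 0 \<le> f z \<and> f z \<le> 1"
  shows "integral\<^sup>L \<mu> f - integral\<^sup>L \<nu> f \<le> var_norm \<mu> \<nu>"
proof (rule ccontr)
  assume "\<not> ?thesis"
  then obtain n :: nat where n: "0 < n" "inverse (real n) < integral\<^sup>L \<mu> f - integral\<^sup>L \<nu> f - var_norm \<mu> \<nu>"
    using ex_inverse_of_nat_less[of "integral\<^sup>L \<mu> f - integral\<^sup>L \<nu> f - var_norm \<mu> \<nu>"] by auto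
  define A where "A k = {z. real k \<le> real n * f z}" for k::nat
  have Am: "A k \<in> sets borel" for k unfolding A_def by measurable
  define g where "g z = (\<Sum>k\<in>{1..n}. indicator (A k) z) / real n" for z
  have gval: "g z = real (nat \<lfloor>real n * f z\<rfloor>) / real n" for z
  proof -
    have "(\<Sum>k\<in>{1..n}. indicator (A k) z) = (\<Sum>k\<in>{1..n}. if real k \<le> real n * f z then 1 else (0::real))"
      by (intro sum.cong) (auto simp: A_def indicator_def)
    also have "\<dots> = real (nat \<lfloor>real n * f z\<rfloor>)"
      using f01[of z] by (intro floor_count) (auto intro: mult_left_le)
    finally show ?thesis unfolding g_def by simp
  qed
  have gf: "g z \<le> f z" and fg: "f z \<le> g z + inverse (real n)" for z
  proof -
    have a0: "0 \<le> real n * f z" using f01[of z] by simp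
    have "real (nat \<lfloor>real n * f z\<rfloor>) = of_int \<lfloor>real n * f z\<rfloor>" using a0 by simp
    then have b: "real (nat \<lfloor>real n * f z\<rfloor>) \<le> real n * f z" "real n * f z < real (nat \<lfloor>real n * f z\<rfloor>) + 1"
      by linarith+
    show "g z \<le> f z" unfolding gval using b n(1) by (simp add: divide_le_eq mult.commute)
    show "f z \<le> g z + inverse (real n)" unfolding gval using b n(1)
      by (simp add: field_simps)
  qed
  have gm[measurable]: "g \<in> borel_measurable borel" unfolding g_def using Am by measurable
  have gb: "\<bar>g z\<bar> \<le> 1" for z using gf[of z] f01[of z] gval[of z] by simp
  have fb: "\<bar>f z\<bar> \<le> 1" for z using f01[of z] by simp
  have gint: "integral\<^sup>L M g = (\<Sum>k\<in>{1..n}. measure M (A k)) / real n"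
    if "prob_space M" "sets M = sets borel" for M
  proof -
    interpret prob_space M by fact
    have "integral\<^sup>L M g = integral\<^sup>L M (\<lambda>z. \<Sum>k\<in>{1..n}. indicator (A k) z) / real n"
      unfolding g_def by (rule integral_divide_zero)
    also have "integral\<^sup>L M (\<lambda>z. \<Sum>k\<in>{1..n}. indicator (A k) z :: real) = (\<Sum>k\<in>{1..n}. integral\<^sup>L M (indicator (A k)))"
      apply (intro Bochner_Integration.integral_sum)
      subgoal for k
        by (intro Bochner_Integration.integrable_real_indicator) (use Am[of k] that(2) in \<open>simp_all add: less_top[symmetric]\<close>)
      done
    also have "\<dots> = (\<Sum>k\<in>{1..n}. measure M (A k))"
      using Am that(2) by (intro sum.cong refl integral_indicator) auto
    finally show ?thesis .
  qed
  have i1: "integral\<^sup>L \<mu> f \<le> integral\<^sup>L \<mu> (\<lambda>z. g z + inverse (real n))"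
    using fg int_bnd[OF p\<mu> s\<mu> fm fb] int_bnd[OF p\<mu> s\<mu> gm gb]
    by (intro integral_mono) (auto intro!: Bochner_Integration.integrable_add finite_measure.integrable_const prob_space.finite_measure[OF p\<mu>])
  also have "\<dots> = integral\<^sup>L \<mu> g + inverse (real n)"
    using int_bnd[OF p\<mu> s\<mu> gm gb] prob_space.prob_space[OF p\<mu>]
    by (subst Bochner_Integration.integral_add) (auto intro!: finite_measure.integrable_const prob_space.finite_measure[OF p\<mu>])
  finally have i1: "integral\<^sup>L \<mu> f \<le> integral\<^sup>L \<mu> g + inverse (real n)" .
  have i2: "integral\<^sup>L \<nu> g \<le> integral\<^sup>L \<nu> f"
    using gf int_bnd[OF p\<nu> s\<nu> fm fb] int_bnd[OF p\<nu> s\<nu> gm gb]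
    by (intro integral_mono) auto
  have "integral\<^sup>L \<mu> g - integral\<^sup>L \<nu> g = (\<Sum>k\<in>{1..n}. measure \<mu> (A k) - measure \<nu> (A k)) / real n"
    unfolding gint[OF p\<mu> s\<mu>] gint[OF p\<nu> s\<nu>] by (simp add: sum_subtractf diff_divide_distrib)
  also have "\<dots> \<le> (\<Sum>k\<in>{1..n}. var_norm \<mu> \<nu>) / real n"
    using vn_upper[OF p\<mu> p\<nu> Am] by (intro divide_right_mono sum_mono) (auto intro: order_trans[OF abs_ge_self])
  also have "\<dots> = var_norm \<mu> \<nu>" using n(1) by simp
  finally show False using i1 i2 n(2) by linarith
qed

lemma int_ind:
  assumes "prob_space M" "sets M = sets borel" "A \<in> sets borel"
  shows "integral\<^sup>L M (indicator A :: _ \<Rightarrow> real) = measure M A"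
proof -
  interpret prob_space M by fact
  have "space M = UNIV" using sets_eq_imp_space_eq[OF assms(2)] by simp
  then show ?thesis by simp
qed

definition F01 :: "('a::euclidean_space \<Rightarrow> real) set" where
  "F01 = {f. f \<in> borel_measurable borel \<and> (\<forall>z. 0 \<le> f z \<and> f z \<le> 1)}"

lemma vn_eq:
  fixes \<mu> \<nu> :: "'a::euclidean_space measure"
  assumes p\<mu>: "prob_space \<mu>" and p\<nu>: "prob_space \<nu>" and s\<mu>: "sets \<mu> = sets borel" and s\<nu>: "sets \<nu> = sets borel"
  shows "var_norm \<mu> \<nu> = (SUP f \<in> F01. integral\<^sup>L \<mu> f - integral\<^sup>L \<nu> f)"
proof -
  have ne: "F01 \<noteq> ({} :: ('a \<Rightarrow> real) set)" unfolding F01_def by (auto intro!: exI[of _ "\<lambda>_. 0"])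
  have bdd: "bdd_above ((\<lambda>f. integral\<^sup>L \<mu> f - integral\<^sup>L \<nu> f) ` F01)"
    using vn_le[OF assms] unfolding F01_def by (intro bdd_aboveI[where M="var_norm \<mu> \<nu>"]) auto
  have spmu: "space \<mu> = UNIV" using sets_eq_imp_space_eq[OF s\<mu>] by simp
  have spnu: "space \<nu> = UNIV" using sets_eq_imp_space_eq[OF s\<nu>] by simp
  have indF: "indicator A \<in> F01" if "A \<in> sets borel" for A :: "'a set"
    unfolding F01_def using that by (auto simp: indicator_def)
  show ?thesis
  proof (rule antisym)
    show "var_norm \<mu> \<nu> \<le> (SUP f \<in> F01. integral\<^sup>L \<mu> f - integral\<^sup>L \<nu> f)"
      unfolding var_norm_def
    proof (rule cSUP_least)
      show "sets borel \<noteq> {}" by auto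
      fix A :: "'a set" assume A: "A \<in> sets borel"
      have B: "UNIV - A \<in> sets borel" using A by auto
      have m1: "measure \<mu> (UNIV - A) = 1 - measure \<mu> A"
        using prob_space.prob_compl[OF p\<mu>, of A] A s\<mu> spmu by simp
      have m2: "measure \<nu> (UNIV - A) = 1 - measure \<nu> A"
        using prob_space.prob_compl[OF p\<nu>, of A] A s\<nu> spnu by simp
      have u1: "measure \<mu> A - measure \<nu> A \<le> (SUP f \<in> F01. integral\<^sup>L \<mu> f - integral\<^sup>L \<nu> f)"
        using cSUP_upper[OF indF[OF A] bdd] int_ind[OF p\<mu> s\<mu> A] int_ind[OF p\<nu> s\<nu> A] by simp
      have u2: "measure \<mu> (UNIV - A) - measure \<nu> (UNIV - A) \<le> (SUP f \<in> F01. integral\<^sup>L \<mu> f - integral\<^sup>L \<nu> f)"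
        using cSUP_upper[OF indF[OF B] bdd] int_ind[OF p\<mu> s\<mu> B] int_ind[OF p\<nu> s\<nu> B] by simp
      show "\<bar>measure \<mu> A - measure \<nu> A\<bar> \<le> (SUP f \<in> F01. integral\<^sup>L \<mu> f - integral\<^sup>L \<nu> f)"
        using u1 u2 m1 m2 by linarith
    qed
    show "(SUP f \<in> F01. integral\<^sup>L \<mu> f - integral\<^sup>L \<nu> f) \<le> var_norm \<mu> \<nu>"
      using vn_le[OF assms] ne unfolding F01_def by (intro cSUP_least) auto
  qed
qed


lemma mt_prob:
  assumes "markov_transition P" "t \<ge> 0"
  shows "prob_space (P t x)" "sets (P t x) = sets borel"
  using assms unfolding markov_transition_def by auto

lemma mt_meas:
  assumes "markov_transition P" "t \<ge> 0"
  shows "P t \<in> borel \<rightarrow>\<^sub>M subprob_algebra borel"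
  using assms unfolding markov_transition_def by auto

lemma mt_ck:
  assumes "markov_transition P" "s \<ge> 0" "t \<ge> 0"
  shows "P (s + t) x = P s x \<bind> P t"
  using assms unfolding markov_transition_def by auto

lemma int_le1:
  fixes f :: "'a::euclidean_space \<Rightarrow> real"
  assumes "prob_space M" "sets M = sets borel" "f \<in> borel_measurable borel" "\<And>z. \<bar>f z\<bar> \<le> 1"
  shows "\<bar>integral\<^sup>L M f\<bar> \<le> 1"
proof -
  interpret prob_space M by fact
  have i: "integrable M f" using int_bnd[OF assms] .
  have "integral\<^sup>L M f \<le> integral\<^sup>L M (\<lambda>_. 1::real)"
    using i assms(4) by (intro integral_mono) (auto simp: abs_le_iff)
  moreover have "integral\<^sup>L M (\<lambda>_. -1::real) \<le> integral\<^sup>L M f"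
    using i assms(4) by (intro integral_mono) (auto simp: abs_le_iff)
  ultimately show ?thesis by (simp add: prob_space)
qed

lemma vn_tendsto:
  fixes P :: "real \<Rightarrow> 'a::euclidean_space \<Rightarrow> 'a measure"
  assumes mt: "markov_transition P" and h2: "H2 P" and t: "t > 0"
  shows "((\<lambda>y. var_norm (P t x) (P t y)) \<longlongrightarrow> 0) (at x)"
proof -
  define G where "G = {f::'a\<Rightarrow>real. f \<in> borel_measurable borel \<and> (\<forall>z. \<bar>f z\<bar> \<le> 1)}"
  define D where "D y = (SUP f \<in> G. Pf P t f x - Pf P t f y)" for y
  have D0: "(D \<longlongrightarrow> 0) (at x)" using h2 t unfolding H2_def D_def G_def by auto
  have pr: "prob_space (P t z)" "sets (P t z) = sets borel" for z using mt_prob[OF mt] t by auto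
  have le: "var_norm (P t x) (P t y) \<le> D y" for y
  proof -
    have bdd: "bdd_above ((\<lambda>f. Pf P t f x - Pf P t f y) ` G)"
    proof (rule bdd_aboveI[where M=2])
      fix r assume "r \<in> (\<lambda>f. Pf P t f x - Pf P t f y) ` G"
      then obtain f where f: "f \<in> G" "r = Pf P t f x - Pf P t f y" by auto
      then show "r \<le> 2" unfolding Pf_def G_def using int_le1[OF pr(1,2), of f x] int_le1[OF pr(1,2), of f y] by auto
    qed
    have ne: "F01 \<noteq> ({} :: ('a \<Rightarrow> real) set)" unfolding F01_def by (auto intro!: exI[of _ "\<lambda>_. 0"])
    have "var_norm (P t x) (P t y) = (SUP f \<in> F01. integral\<^sup>L (P t x) f - integral\<^sup>L (P t y) f)"
      by (rule vn_eq[OF pr(1) pr(1) pr(2) pr(2)])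
    also have "\<dots> \<le> D y" unfolding D_def
    proof (rule cSUP_least[OF ne])
      fix f :: "'a \<Rightarrow> real" assume "f \<in> F01"
      then have "f \<in> G" unfolding F01_def G_def by auto
      from cSUP_upper[OF this bdd] show "integral\<^sup>L (P t x) f - integral\<^sup>L (P t y) f \<le> (SUP f \<in> G. Pf P t f x - Pf P t f y)"
        unfolding Pf_def .
    qed
    finally show ?thesis .
  qed
  show ?thesis
    by (rule tendsto_sandwich[OF _ _ tendsto_const D0]) (auto intro!: always_eventually vn_nonneg[OF pr(1) pr(1)] le)
qed

lemma vn_isCont:
  fixes P :: "real \<Rightarrow> 'a::euclidean_space \<Rightarrow> 'a measure"
  assumes mt: "markov_transition P" and h2: "H2 P" and t: "t > 0"
  shows "isCont (\<lambda>y. var_norm (P t x) (P t y)) x"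
  unfolding isCont_def using vn_tendsto[OF assms] by (simp add: vn_same)

lemma vn_cont2:
  fixes P :: "real \<Rightarrow> 'a::euclidean_space \<Rightarrow> 'a measure"
  assumes mt: "markov_transition P" and h2: "H2 P" and t: "t > 0"
  shows "continuous_on S (\<lambda>p. var_norm (P t (fst p)) (P t (snd p)))"
proof (rule continuous_at_imp_continuous_on, safe)
  fix a b :: 'a
  have pr: "prob_space (P t z)" for z using mt_prob[OF mt] t by auto
  let ?g = "\<lambda>p. var_norm (P t (fst p)) (P t (snd p))"
  let ?h = "\<lambda>p. var_norm (P t a) (P t (fst p)) + var_norm (P t b) (P t (snd p))"
  have h0: "(?h \<longlongrightarrow> 0) (at (a, b))"
  proof -
    have "((\<lambda>p. var_norm (P t a) (P t (fst p))) \<longlongrightarrow> var_norm (P t a) (P t a)) (at (a, b))"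
      by (rule isCont_tendsto_compose[OF vn_isCont[OF assms]]) (use tendsto_fst[OF tendsto_ident_at[of "(a,b)" UNIV]] in simp)
    moreover have "((\<lambda>p. var_norm (P t b) (P t (snd p))) \<longlongrightarrow> var_norm (P t b) (P t b)) (at (a, b))"
      by (rule isCont_tendsto_compose[OF vn_isCont[OF assms]]) (use tendsto_snd[OF tendsto_ident_at[of "(a,b)" UNIV]] in simp)
    ultimately show ?thesis using tendsto_add by (fastforce simp: vn_same)
  qed
  have "((\<lambda>p. ?g p - ?g (a, b)) \<longlongrightarrow> 0) (at (a, b))"
  proof (rule Lim_null_comparison[OF _ h0], rule always_eventually, rule allI)
    fix p :: "'a \<times> 'a"
    have 1: "?g p \<le> var_norm (P t a) (P t (fst p)) + var_norm (P t a) (P t b) + var_norm (P t b) (P t (snd p))"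
      using vn_tri[OF pr[of "fst p"] pr[of a] pr[of "snd p"]] vn_tri[OF pr[of a] pr[of b] pr[of "snd p"]] vn_sym[of "P t (fst p)" "P t a"]
      by linarith
    have 2: "?g (a, b) \<le> var_norm (P t a) (P t (fst p)) + ?g p + var_norm (P t b) (P t (snd p))"
      using vn_tri[OF pr[of a] pr[of "fst p"] pr[of b]] vn_tri[OF pr[of "fst p"] pr[of "snd p"] pr[of b]] vn_sym[of "P t (snd p)" "P t b"]
      by simp
    show "norm (?g p - ?g (a, b)) \<le> ?h p" using 1 2 by simp
  qed
  then show "isCont ?g (a, b)" unfolding isCont_def by (rule LIM_zero_cancel)
qed


lemma pair_snd:
  assumes "prob_space M" "prob_space N"
  shows "distr (M \<Otimes>\<^sub>M N) N snd = N"
proof (intro measure_eqI)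
  interpret M: prob_space M by fact
  interpret N: prob_space N by fact
  interpret pair_sigma_finite M N by unfold_locales
  fix A assume A: "A \<in> sets (distr (M \<Otimes>\<^sub>M N) N snd)"
  from A have "emeasure (distr (M \<Otimes>\<^sub>M N) N snd) A = emeasure (M \<Otimes>\<^sub>M N) (space M \<times> A)"
    by (auto simp add: emeasure_distr space_pair_measure dest: sets.sets_into_space intro!: arg_cong2[where f=emeasure])
  also have "\<dots> = emeasure M (space M) * emeasure N A"
    by (rule N.emeasure_pair_measure_Times) (use A in auto)
  finally show "emeasure (distr (M \<Otimes>\<^sub>M N) N snd) A = emeasure N A"
    by (simp add: M.emeasure_space_1)
qed simp

lemma couplings_ne:
  fixes \<mu> \<nu> :: "'a::euclidean_space measure"
  assumes "prob_space \<mu>" "prob_space \<nu>" "sets \<mu> = sets borel" "sets \<nu> = sets borel"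
  shows "\<mu> \<Otimes>\<^sub>M \<nu> \<in> couplings \<mu> \<nu>"
proof -
  interpret N: prob_space \<nu> by fact
  have "distr (\<mu> \<Otimes>\<^sub>M \<nu>) borel fst = distr (\<mu> \<Otimes>\<^sub>M \<nu>) \<mu> fst"
    by (rule distr_cong) (simp_all add: assms)
  also have "\<dots> = \<mu>" by (rule N.distr_pair_fst)
  finally have 1: "distr (\<mu> \<Otimes>\<^sub>M \<nu>) borel fst = \<mu>" .
  have "distr (\<mu> \<Otimes>\<^sub>M \<nu>) borel snd = distr (\<mu> \<Otimes>\<^sub>M \<nu>) \<nu> snd"
    by (rule distr_cong) (simp_all add: assms)
  also have "\<dots> = \<nu>" by (rule pair_snd[OF assms(1,2)])
  finally have 2: "distr (\<mu> \<Otimes>\<^sub>M \<nu>) borel snd = \<nu>" .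
  show ?thesis unfolding couplings_def
    using 1 2 prob_space_pair[OF assms(1,2)] sets_pair_measure_cong[OF assms(3,4)] by auto
qed

lemma key_step:
  fixes P :: "real \<Rightarrow> 'a::euclidean_space \<Rightarrow> 'a measure" and S :: "('a \<times> 'a) set"
  assumes mt: "markov_transition P" and s: "s \<ge> 0"
    and pi: "\<pi> \<in> couplings (P s x) (P s y)"
    and S: "S \<in> sets borel"
    and close: "\<And>p. p \<in> S \<Longrightarrow> var_norm (P 1 (fst p)) (P 1 (snd p)) \<le> 1/2"
    and f: "f \<in> F01"
  shows "Pf P (s+1) f x - Pf P (s+1) f y \<le> 1 - measure \<pi> S / 2"
proof -
  have fm[measurable]: "f \<in> borel_measurable borel" and f01: "\<And>z. 0 \<le> f z \<and> f z \<le> 1"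
    using f unfolding F01_def by auto
  have fb: "\<And>z. \<bar>f z\<bar> \<le> 1" using f01 by (simp add: abs_le_iff)
  have ppi: "prob_space \<pi>" and spi0: "sets \<pi> = sets (borel \<Otimes>\<^sub>M borel)"
    and d1: "distr \<pi> borel fst = P s x" and d2: "distr \<pi> borel snd = P s y"
    using pi unfolding couplings_def by auto
  have spi: "sets \<pi> = sets borel" using spi0 by (simp only: borel_prod)
  have pr: "prob_space (P t z)" "sets (P t z) = sets borel" if "t \<ge> 0" for t z using mt_prob[OF mt that] by auto
  define h where "h z = integral\<^sup>L (P 1 z) f" for z
  have hm[measurable]: "h \<in> borel_measurable borel"
    unfolding h_def by (rule measurable_compose[OF mt_meas[OF mt, of 1] integral_measurable_subprob_algebra[OF fm]]) simp
  have h01: "0 \<le> h z" "h z \<le> 1" for z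
  proof -
    show "0 \<le> h z" unfolding h_def by (rule Bochner_Integration.integral_nonneg) (use f01 in auto)
    show "h z \<le> 1" unfolding h_def using int_le1[OF pr[of 1] fm fb, of z] by simp
  qed
  have hb: "\<bar>h z\<bar> \<le> 1" for z using h01[of z] by simp
  have bind: "Pf P (s+1) f w = integral\<^sup>L (P s w) h" for w
  proof -
    have "P (s+1) w = P s w \<bind> P 1" by (rule mt_ck[OF mt s]) simp
    moreover have "integral\<^sup>L (P s w \<bind> P 1) f = integral\<^sup>L (P s w) h"
      unfolding h_def
    proof (rule integral_bind[where K=borel and B=1 and B'=1])
      show "f \<in> borel_measurable borel" by simp
      show "\<And>z. z \<in> space borel \<Longrightarrow> \<bar>f z\<bar> \<le> 1" using fb by simp
      show "P 1 \<in> P s w \<rightarrow>\<^sub>M subprob_algebra borel"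
        by (subst measurable_cong_sets[OF pr(2)[OF s, of w] refl]) (rule mt_meas[OF mt], simp)
      show "finite_measure (P s w)" using prob_space.finite_measure[OF pr(1)[OF s, of w]] .
      show "AE z in P s w. emeasure (P 1 z) (space (P 1 z)) \<le> ennreal 1"
        using prob_space.emeasure_space_1[OF pr(1)[of 1]] by simp
    qed
    ultimately show ?thesis unfolding Pf_def by simp
  qed
  have fstm: "fst \<in> \<pi> \<rightarrow>\<^sub>M borel" and sndm: "snd \<in> \<pi> \<rightarrow>\<^sub>M borel"
    using measurable_cong_sets[OF spi0 refl] by auto
  have e1: "integral\<^sup>L (P s x) h = integral\<^sup>L \<pi> (\<lambda>p. h (fst p))"
    unfolding d1[symmetric] by (rule integral_distr[OF fstm hm])
  have e2: "integral\<^sup>L (P s y) h = integral\<^sup>L \<pi> (\<lambda>p. h (snd p))"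
    unfolding d2[symmetric] by (rule integral_distr[OF sndm hm])
  have hfm: "(\<lambda>p. h (fst p)) \<in> borel_measurable (borel :: ('a \<times> 'a) measure)"
    using measurable_compose[OF measurable_fst[of "borel::'a measure" "borel::'a measure"] hm] by (simp only: borel_prod)
  have hsm: "(\<lambda>p. h (snd p)) \<in> borel_measurable (borel :: ('a \<times> 'a) measure)"
    using measurable_compose[OF measurable_snd[of "borel::'a measure" "borel::'a measure"] hm] by (simp only: borel_prod)
  have i1: "integrable \<pi> (\<lambda>p. h (fst p))" by (rule int_bnd[OF ppi spi hfm]) (rule hb)
  have i2: "integrable \<pi> (\<lambda>p. h (snd p))" by (rule int_bnd[OF ppi spi hsm]) (rule hb)
  interpret PI: prob_space \<pi> by (rule ppi)
  have iS: "integrable \<pi> (indicator S :: _ \<Rightarrow> real)"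
    using S spi by (intro integrable_real_indicator) (simp_all add: less_top[symmetric])
  have "Pf P (s+1) f x - Pf P (s+1) f y = integral\<^sup>L \<pi> (\<lambda>p. h (fst p) - h (snd p))"
    unfolding bind e1 e2 by (rule Bochner_Integration.integral_diff[OF i1 i2, symmetric])
  also have "\<dots> \<le> integral\<^sup>L \<pi> (\<lambda>p. 1 - indicator S p / 2)"
  proof (rule integral_mono)
    show "integrable \<pi> (\<lambda>p. h (fst p) - h (snd p))" using i1 i2 by auto
    show "integrable \<pi> (\<lambda>p. 1 - indicator S p / 2 :: real)" using iS by auto
    fix p :: "'a \<times> 'a"
    show "h (fst p) - h (snd p) \<le> 1 - indicator S p / 2"
    proof (cases "p \<in> S")
      case True
      have "h (fst p) - h (snd p) \<le> var_norm (P 1 (fst p)) (P 1 (snd p))"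
        unfolding h_def by (rule vn_le[OF pr(1)[of 1] pr(1)[of 1] pr(2)[of 1] pr(2)[of 1] fm f01]) simp_all
      then show ?thesis using close[OF True] True by simp
    next
      case False
      then show ?thesis using h01[of "fst p"] h01[of "snd p"] by simp
    qed
  qed
  also have "\<dots> = 1 - measure \<pi> S / 2"
    using iS int_ind[OF ppi spi S] by (simp add: PI.prob_space)
  finally show ?thesis .
qed


theorem lemma3p3:
  fixes P :: "real \<Rightarrow> real^'n \<Rightarrow> (real^'n) measure" and R :: real
  assumes "markov_transition P" and "H1 P" and "H2 P" and "R > 0"
  shows "\<exists>T0 > 1.
     (\<forall>t > T0. \<forall>x y. norm x \<le> R \<longrightarrow> norm y \<le> R \<longrightarrow>
        var_norm (P t x) (P t y) =
          (SUP f \<in> {f. f \<in> borel_measurable borel \<and> (\<forall>z. 0 \<le> f z \<and> f z \<le> 1)}.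
             Pf P t f x - Pf P t f y)
        \<and> var_norm (P t x) (P t y) < 1) \<and>
     (\<forall>t > T0. (SUP xy \<in> cball 0 R \<times> cball 0 R. var_norm (P t (fst xy)) (P t (snd xy))) < 1)"
proof -
  note mt = assms(1) and h2 = assms(3)
  have pr: "prob_space (P t z)" "sets (P t z) = sets borel" if "t \<ge> 0" for t z
    using mt_prob[OF mt that] by auto
  obtain R0 where R0: "R0 > 0" and hR0: "\<forall>\<delta>>0. \<exists>T0. \<forall>t\<ge>T0. \<forall>x y. norm x \<le> R \<longrightarrow> norm y \<le> R \<longrightarrow>
     (SUP \<pi> \<in> couplings (P t x) (P t y).
        measure \<pi> {(x', y'). dist x' y' \<le> \<delta> \<and> norm x' \<le> R0 \<and> norm y' \<le> R0}) > 0"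
    using assms(2) assms(4) unfolding H1_def by blast
  define g1 where "g1 p = var_norm (P 1 (fst p)) (P 1 (snd p))" for p :: "(real^'n) \<times> (real^'n)"
  define K where "K = cball (0::real^'n) R0 \<times> cball (0::real^'n) R0"
  have "uniformly_continuous_on K g1"
    unfolding g1_def K_def
    by (rule compact_uniformly_continuous[OF vn_cont2[OF mt h2]]) (auto intro: compact_Times)
  then obtain d where d: "d > 0" and dd: "\<forall>x\<in>K. \<forall>x'\<in>K. dist x' x < d \<longrightarrow> dist (g1 x') (g1 x) < 1/2"
    unfolding uniformly_continuous_on_def by (meson half_gt_zero zero_less_one)
  define \<delta> where "\<delta> = d / 2"
  have \<delta>: "\<delta> > 0" using d by (simp add: \<delta>_def)
  have close: "var_norm (P 1 a) (P 1 b) \<le> 1/2" if "dist a b \<le> \<delta>" "norm a \<le> R0" "norm b \<le> R0" for a b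
  proof -
    have in1: "(a, a) \<in> K" "(a, b) \<in> K" using that by (auto simp: K_def)
    have "dist (a, b) (a, a) = dist a b" by (simp add: dist_Pair_Pair dist_commute)
    then have "dist (a, b) (a, a) < d" using that(1) d by (simp add: \<delta>_def)
    then have "dist (g1 (a, b)) (g1 (a, a)) < 1/2" using dd in1 by blast
    then show ?thesis by (simp add: g1_def vn_same dist_real_def)
  qed
  obtain T1 where T1: "\<forall>t\<ge>T1. \<forall>x y. norm x \<le> R \<longrightarrow> norm y \<le> R \<longrightarrow>
     (SUP \<pi> \<in> couplings (P t x) (P t y).
        measure \<pi> {(x', y'). dist x' y' \<le> \<delta> \<and> norm x' \<le> R0 \<and> norm y' \<le> R0}) > 0"
    using hR0 \<delta> by blast
  define S where "S = {(x'::real^'n, y'). dist x' y' \<le> \<delta> \<and> norm x' \<le> R0 \<and> norm y' \<le> R0}"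
  have "closed S"
  proof -
    have "S = {p. dist (fst p) (snd p) \<le> \<delta>} \<inter> {p. norm (fst p) \<le> R0} \<inter> {p. norm (snd p) \<le> R0}"
      unfolding S_def by auto
    also have "closed \<dots>"
      by (intro closed_Int closed_Collect_le continuous_intros)
    finally show ?thesis .
  qed
  then have Sm: "S \<in> sets borel" by (rule borel_closed)
  define T0 where "T0 = max T1 1 + 1"
  have main: "var_norm (P t x) (P t y) < 1" if t: "t > T0" and x: "norm x \<le> R" and y: "norm y \<le> R" for t x y
  proof -
    define s where "s = t - 1"
    have s: "s \<ge> T1" "s \<ge> 0" and ts: "t = s + 1" using t by (auto simp: s_def T0_def)
    have pos: "(SUP \<pi> \<in> couplings (P s x) (P s y). measure \<pi> S) > 0"
      using T1 s(1) x y unfolding S_def by blast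
    have ne: "couplings (P s x) (P s y) \<noteq> {}"
      using couplings_ne[OF pr(1)[OF s(2)] pr(1)[OF s(2)] pr(2)[OF s(2)] pr(2)[OF s(2)]] by blast
    have bdd: "bdd_above ((\<lambda>\<pi>. measure \<pi> S) ` couplings (P s x) (P s y))"
      by (rule bdd_aboveI[where M=1]) (auto simp: couplings_def intro: prob_space.prob_le_1)
    obtain \<pi> where pi: "\<pi> \<in> couplings (P s x) (P s y)" and pos': "measure \<pi> S > 0"
      using pos less_cSUP_iff[OF ne bdd] by blast
    have ne2: "F01 \<noteq> ({} :: (real^'n \<Rightarrow> real) set)" unfolding F01_def by (auto intro!: exI[of _ "\<lambda>_. 0"])
    have "var_norm (P t x) (P t y) = (SUP f \<in> F01. integral\<^sup>L (P t x) f - integral\<^sup>L (P t y) f)"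
      using t T0_def by (intro vn_eq pr) auto
    also have "\<dots> \<le> 1 - measure \<pi> S / 2"
    proof (rule cSUP_least[OF ne2])
      fix f :: "real^'n \<Rightarrow> real" assume f: "f \<in> F01"
      have "Pf P (s+1) f x - Pf P (s+1) f y \<le> 1 - measure \<pi> S / 2"
      proof (rule key_step[OF mt s(2) pi Sm _ f])
        fix p assume "p \<in> S"
        then show "var_norm (P 1 (fst p)) (P 1 (snd p)) \<le> 1/2"
          unfolding S_def by (intro close) auto
      qed
      then show "integral\<^sup>L (P t x) f - integral\<^sup>L (P t y) f \<le> 1 - measure \<pi> S / 2"
        unfolding ts Pf_def .
    qed
    also have "\<dots> < 1" using pos' by simp
    finally show ?thesis .
  qed
  show ?thesis
  proof (intro exI[of _ T0] conjI allI impI)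
    show "T0 > 1" unfolding T0_def by simp
  next
    fix t :: real and x y :: "real^'n" assume t: "t > T0" and x: "norm x \<le> R" and y: "norm y \<le> R"
    have "t \<ge> 0" using t unfolding T0_def by simp
    then show "var_norm (P t x) (P t y) =
          (SUP f \<in> {f. f \<in> borel_measurable borel \<and> (\<forall>z. 0 \<le> f z \<and> f z \<le> 1)}.
             Pf P t f x - Pf P t f y)"
      using vn_eq[OF pr(1) pr(1) pr(2) pr(2)] unfolding F01_def Pf_def by blast
    show "var_norm (P t x) (P t y) < 1" by (rule main[OF t x y])
  next
    fix t :: real assume t: "t > T0"
    have t0: "t > 0" using t unfolding T0_def by simp
    let ?g = "\<lambda>xy. var_norm (P t (fst xy)) (P t (snd xy))"
    have "compact (cball (0::real^'n) R \<times> cball (0::real^'n) R)" by (auto intro: compact_Times)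
    moreover have "cball (0::real^'n) R \<times> cball (0::real^'n) R \<noteq> {}" using assms(4) by auto
    moreover have "continuous_on (cball (0::real^'n) R \<times> cball (0::real^'n) R) ?g" by (rule vn_cont2[OF mt h2 t0])
    ultimately obtain p0 where p0: "p0 \<in> cball 0 R \<times> cball 0 R" and mx: "\<forall>p \<in> cball 0 R \<times> cball 0 R. ?g p \<le> ?g p0"
      using continuous_attains_sup by blast
    have "(SUP xy \<in> cball 0 R \<times> cball 0 R. ?g xy) \<le> ?g p0"
      using mx \<open>cball (0::real^'n) R \<times> cball (0::real^'n) R \<noteq> {}\<close> by (intro cSUP_least) auto
    also have "?g p0 < 1" using p0 by (intro main[OF t]) (auto simp: mem_cball_0)
    finally show "(SUP xy \<in> cball 0 R \<times> cball 0 R. ?g xy) < 1" .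
  qed
qed

end
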